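(* Let $X$ be a connected topological space and let $E$ be a $B_1$-retract of $X$. Then $E$ (with the subspace topology) is connected.
   Context: A function $f:X\to Y$ between topological spaces is a Baire-one function if it is the pointwise limit of a sequence of continuous functions $f_n:X\to Y$. A subset $E$ of $X$ (with the subspace topology) is a $B_1$-retract of $X$ if there exists a Baire-one function $r:X\to E$ with $r(x)=x$ for all $x\in E$. *)

theory Defs
  imports "HOL-Analysis.Analysis"
begin

definition baire_one :: "'a topology \<Rightarrow> 'b topology \<Rightarrow> ('a \<Rightarrow> 'b) \<Rightarrow> bool" where
  "baire_one X Y f \<longleftrightarrow>
     f \<in> topspace X \<rightarrow> topspace Y \<and>
     (\<exists>fs :: nat \<Rightarrow> 'a \<Rightarrow> 'b. (\<forall>n. continuous_map X Y (fs n)) \<and>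
        (\<forall>x\<in>topspace X. limitin Y (\<lambda>n. fs n x) (f x) sequentially))"

definition B1_retract :: "'a topology \<Rightarrow> 'a set \<Rightarrow> bool" where
  "B1_retract X E \<longleftrightarrow> E \<subseteq> topspace X \<and>
     (\<exists>r. baire_one X (subtopology X E) r \<and> (\<forall>x\<in>E. r x = x))"

end

theory Submission
  imports Defs
begin

theorem proposition2p4:
  fixes X :: "'a topology" and E :: "'a set"
  assumes "connected_space X"
    and "B1_retract X E"
  shows "connected_space (subtopology X E)"
proof (rule ccontr)
  assume nc: "\<not> connected_space (subtopology X E)"
  obtain r where r: "baire_one X (subtopology X E) r" "\<forall>x\<in>E. r x = x" and EX: "E \<subseteq> topspace X"
    using assms(2) unfolding B1_retract_def by blast
  obtain fs where fc: "\<And>n. continuous_map X (subtopology X E) (fs n)"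
    and fl: "\<And>x. x\<in>topspace X \<Longrightarrow> limitin (subtopology X E) (\<lambda>n. fs n x) (r x) sequentially"
    using r(1) unfolding baire_one_def by blast
  obtain U V where UV: "openin (subtopology X E) U" "openin (subtopology X E) V"
    "topspace (subtopology X E) \<subseteq> U \<union> V" "U \<inter> V = {}" "U \<noteq> {}" "V \<noteq> {}"
    using nc unfolding connected_space_def by blast
  have UE: "U \<subseteq> E" "V \<subseteq> E" using UV(1,2) openin_subset by fastforce+
  obtain u v where uv: "u \<in> U" "v \<in> V" using UV by blast
  have uX: "u \<in> topspace X" "v \<in> topspace X" using uv UE EX by auto
  have ru: "r u = u" "r v = v" using r(2) uv UE by auto
  have "eventually (\<lambda>n. fs n u \<in> U) sequentially"
    using fl[OF uX(1)] UV(1) uv(1) ru unfolding limitin_def by auto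
  moreover have "eventually (\<lambda>n. fs n v \<in> V) sequentially"
    using fl[OF uX(2)] UV(2) uv(2) ru unfolding limitin_def by auto
  ultimately obtain n where n: "fs n u \<in> U" "fs n v \<in> V"
    using eventually_happens' [OF sequentially_bot] eventually_conj by (metis (mono_tags, lifting) eventually_sequentially order_refl)
  let ?A = "{x \<in> topspace X. fs n x \<in> U}" and ?B = "{x \<in> topspace X. fs n x \<in> V}"
  have oA: "openin X ?A" "openin X ?B"
    using fc[of n] UV(1,2) unfolding continuous_map by auto
  have cov: "topspace X \<subseteq> ?A \<union> ?B"
    using fc[of n] UV(3) unfolding continuous_map_def by auto
  have "?A \<inter> ?B = {}" using UV(4) by auto
  moreover have "?A \<noteq> {}" "?B \<noteq> {}" using n uX by auto
  ultimately show False using assms(1) oA cov unfolding connected_space_def by blast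
qed

end
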